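(* Let $G$ be a non-trivial finite abelian group with $G\not\simeq C_2^2$ and let $f$ be an automorphism of $\mathcal{P}_0(G)$ with trivial pullback. Suppose that the following two conditions hold: (A) for every proper subgroup $H$ of $G$, the restriction of $f$ to $\mathcal{P}_{0}(H)$ is the identity; (B) for every subgroup $H$ of $G$ that is cyclic of prime order, the induced automorphism $f_{G/H}$ of $\mathcal{P}_0(G/H)$ is the identity. Then $f$ is the identity.
   Context: For an additively written finite abelian group $G$, $\mathcal{P}_{0}(G)$ is the monoid of all subsets of $G$ containing $0$, with setwise addition and identity $\{0\}$. An automorphism $f$ of $\mathcal{P}_0(G)$ has trivial pullback if $f(\{0,a\})=\{0,a\}$ for all $a\in G$. For a subgroup $H$, let $\mathcal{P}_{0,H}(G)=\{H+X:X\in\mathcal{P}_0(G)\}$, a monoid with identity $H$, and let $\varphi_H:\mathcal{P}_{0,H}(G)\to\mathcal{P}_0(G/H)$, $H+X\mapsto\{a+H:a\in X\}$, which is a monoid isomorphism. If $f$ has trivial pullback, then $f(H)=H$ and $f$ maps $\mathcal{P}_{0,H}(G)$ onto itself; the induced automorphism is $f_{G/H}=\varphi_H\circ f|_{\mathcal{P}_{0,H}(G)}\circ\varphi_H^{-1}$. Restriction of $f$ to $\mathcal{P}_0(H)$ makes sense since $f$ maps $\mathcal{P}_0(H)$ onto itself for such $f$. $C_2^2$ is the Klein four-group. *)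

theory Defs
  imports Main "HOL-Library.Set_Algebras" "HOL-Computational_Algebra.Primes"
begin

text \<open>The ambient finite abelian group G is the whole of a finite type 'a of class ab_group_add.
Subsets are added setwise (plus_set from Set_Algebras).\<close>

definition P0 :: "'a::zero set set" where
  "P0 = {X. 0 \<in> X}"

definition is_subgroup :: "'a::ab_group_add set \<Rightarrow> bool" where
  "is_subgroup H \<longleftrightarrow> 0 \<in> H \<and> (\<forall>x\<in>H. \<forall>y\<in>H. x + y \<in> H) \<and> (\<forall>x\<in>H. - x \<in> H)"

definition zmult :: "int \<Rightarrow> 'a::ab_group_add \<Rightarrow> 'a" where
  "zmult k g = (if 0 \<le> k then ((+) g ^^ nat k) 0 else - (((+) g ^^ nat (- k)) 0))"

definition is_cyclic_subgroup :: "'a::ab_group_add set \<Rightarrow> bool" where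
  "is_cyclic_subgroup H \<longleftrightarrow> (\<exists>g. H = {zmult k g | k. True})"

definition is_P0_aut :: "('a::ab_group_add set \<Rightarrow> 'a set) \<Rightarrow> bool" where
  "is_P0_aut f \<longleftrightarrow> bij_betw f P0 P0 \<and> f {0} = {0} \<and>
     (\<forall>X\<in>P0. \<forall>Y\<in>P0. f (X + Y) = f X + f Y)"

definition trivial_pullback :: "('a::ab_group_add set \<Rightarrow> 'a set) \<Rightarrow> bool" where
  "trivial_pullback f \<longleftrightarrow> (\<forall>a. f {0, a} = {0, a})"

text \<open>The quotient group G/H is the set of cosets a + H, with setwise addition; its zero is H.\<close>
definition quot :: "'a::ab_group_add set \<Rightarrow> 'a set set" where
  "quot H = range (\<lambda>a. a +o H)"

definition P0_quot :: "'a::ab_group_add set \<Rightarrow> 'a set set set" where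
  "P0_quot H = {S. S \<subseteq> quot H \<and> H \<in> S}"

text \<open>phi_H : P_{0,H}(G) \<rightarrow> P_0(G/H),  H + X \<mapsto> {a + H : a \<in> X}.\<close>
definition phi :: "'a::ab_group_add set \<Rightarrow> 'a set \<Rightarrow> 'a set set" where
  "phi H Y = (\<lambda>a. a +o H) ` Y"

text \<open>The inverse of phi_H: a set S of cosets is sent to the union of its cosets, i.e. H + X
  for any X with phi_H(H + X) = S.\<close>
definition phi_inv :: "'a::ab_group_add set \<Rightarrow> 'a set set \<Rightarrow> 'a set" where
  "phi_inv H S = \<Union> S"

definition induced_aut :: "('a::ab_group_add set \<Rightarrow> 'a set) \<Rightarrow> 'a set \<Rightarrow> 'a set set \<Rightarrow> 'a set set" where
  "induced_aut f H S = phi H (f (phi_inv H S))"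

definition klein_add :: "bool \<times> bool \<Rightarrow> bool \<times> bool \<Rightarrow> bool \<times> bool" where
  "klein_add p q = (fst p \<noteq> fst q, snd p \<noteq> snd q)"

definition iso_klein :: "'a::ab_group_add itself \<Rightarrow> bool" where
  "iso_klein _ \<longleftrightarrow> (\<exists>\<phi> :: 'a \<Rightarrow> bool \<times> bool. bij \<phi> \<and> (\<forall>x y. \<phi> (x + y) = klein_add (\<phi> x) (\<phi> y)))"

end

theory Submission
  imports Defs
begin


lemma mem_plus2: "z \<in> X + {0, a} \<longleftrightarrow> z \<in> X \<or> z - a \<in> X"
  for X :: "'a::ab_group_add set"
proof
  assume "z \<in> X + {0, a}"
  then show "z \<in> X \<or> z - a \<in> X" unfolding set_plus_def by auto
next
  assume "z \<in> X \<or> z - a \<in> X"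
  then show "z \<in> X + {0, a}"
  proof
    assume "z \<in> X" then show ?thesis by (force simp: set_plus_def)
  next
    assume h: "z - a \<in> X"
    have "z = (z - a) + a" by simp
    then show ?thesis using h unfolding set_plus_def by blast
  qed
qed

lemma sub_plus2: "0 \<in> B \<Longrightarrow> X \<subseteq> X + B"
  for X :: "'a::ab_group_add set"
  by (force simp: set_plus_def)

definition nm :: "nat \<Rightarrow> 'a::ab_group_add \<Rightarrow> 'a" where
  "nm n g = ((+) g ^^ n) 0"

lemma nm_0[simp]: "nm 0 g = 0" by (simp add: nm_def)
lemma nm_Suc: "nm (Suc n) g = g + nm n g" by (simp add: nm_def)
lemma nm_add: "nm (m + n) g = nm m g + nm n g"
  by (induction m) (simp_all add: nm_Suc add.assoc)
lemma nm_1[simp]: "nm 1 g = g" by (simp add: nm_Suc)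
lemma nm_mult: "nm (m * n) g = nm m (nm n g)"
  by (induction m) (simp_all add: nm_Suc nm_add)
lemma nm_zero_elt[simp]: "nm n 0 = 0" by (induction n) (simp_all add: nm_Suc)

lemma nm_mod:
  assumes "nm p g = 0" shows "nm n g = nm (n mod p) g"
proof -
  have "n = p * (n div p) + n mod p" by simp
  then have "nm n g = nm (p * (n div p)) g + nm (n mod p) g" by (metis nm_add)
  also have "nm (p * (n div p)) g = 0"
    by (metis mult.commute nm_mult assms nm_zero_elt)
  finally show ?thesis by simp
qed

lemma exists_order:
  fixes a :: "'a::{finite,ab_group_add}"
  shows "\<exists>n>0. nm n a = 0"
proof -
  have "\<not> inj (\<lambda>n::nat. nm n a)"
  proof
    assume "inj (\<lambda>n::nat. nm n a)"
    then have "infinite (range (\<lambda>n::nat. nm n a))"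
      using finite_imageD infinite_UNIV_nat by blast
    then show False by simp
  qed
  then obtain i j where ij: "i \<noteq> j" "nm i a = nm j a" unfolding inj_def by blast
  show ?thesis
  proof (cases "i < j")
    case True
    have "nm j a = nm i a + nm (j - i) a" using True nm_add[of i "j-i" a] by simp
    then show ?thesis using ij True by (intro exI[of _ "j-i"]) auto
  next
    case False
    then have "j < i" using ij by simp
    have "nm i a = nm j a + nm (i - j) a" using \<open>j < i\<close> nm_add[of j "i-j" a] by simp
    then show ?thesis using ij \<open>j < i\<close> by (intro exI[of _ "i-j"]) auto
  qed
qed

lemma prime_order_elt:
  fixes a :: "'a::{finite,ab_group_add}"
  assumes "a \<noteq> 0"
  shows "\<exists>p q. prime p \<and> nm p (nm q a) = 0 \<and> (\<forall>j. 0 < j \<longrightarrow> j < p \<longrightarrow> nm j (nm q a) \<noteq> 0)"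
proof -
  define n where "n = (LEAST n. n > 0 \<and> nm n a = 0)"
  have n: "n > 0 \<and> nm n a = 0" unfolding n_def using exists_order[of a] by (metis (mono_tags, lifting) LeastI)
  have nmin: "\<And>k. 0 < k \<Longrightarrow> k < n \<Longrightarrow> nm k a \<noteq> 0" unfolding n_def using not_less_Least by blast
  have "n \<noteq> 1" using n assms by (auto simp: nm_Suc)
  then obtain p where p: "prime p" "p dvd n" using prime_factor_nat by blast
  then obtain q where q: "n = p * q" by blast
  have "q > 0" using n q by auto
  show ?thesis
  proof (intro exI conjI allI impI)
    show "prime p" by fact
    show "nm p (nm q a) = 0" using n q by (simp add: nm_mult)
    fix j assume "0 < j" "j < p"
    then have "0 < j * q" "j * q < n" using \<open>q > 0\<close> q by auto
    then show "nm j (nm q a) \<noteq> 0" using nmin[of "j*q"] by (simp add: nm_mult[symmetric])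
  qed
qed



lemma zmult_nm: "zmult k g = (if 0 \<le> k then nm (nat k) g else - nm (nat (-k)) g)"
  by (simp add: zmult_def nm_def)

lemma prime_subgroup:
  fixes a :: "'a::{finite,ab_group_add}"
  assumes "a \<noteq> 0"
  shows "\<exists>H. is_subgroup H \<and> is_cyclic_subgroup H \<and> prime (card H) \<and> (\<forall>h\<in>H. \<exists>i. h = nm i a)"
proof -
  obtain p q where p: "prime p" and pz: "nm p (nm q a) = 0"
    and pmin: "\<And>j. 0 < j \<Longrightarrow> j < p \<Longrightarrow> nm j (nm q a) \<noteq> 0"
    using prime_order_elt[OF assms] by blast
  define g where "g = nm q a"
  have pz': "nm p g = 0" using pz g_def by simp
  have pmin': "\<And>j. 0 < j \<Longrightarrow> j < p \<Longrightarrow> nm j g \<noteq> 0" using pmin g_def by simp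
  have ppos: "p > 0" using p prime_gt_0_nat by blast
  have md: "\<And>n. nm n g = nm (n mod p) g" using nm_mod[OF pz'] .
  have neg: "\<And>m. - nm m g = nm (p - m mod p) g"
  proof -
    fix m
    have "m mod p < p" using ppos by simp
    then have "nm (m mod p) g + nm (p - m mod p) g = 0"
      using pz' nm_add[of "m mod p" "p - m mod p" g] by simp
    then show "- nm m g = nm (p - m mod p) g" using md[of m]
      by (metis add.commute add_eq_0_iff2 minus_unique)
  qed
  define H where "H = {zmult k g | k. True}"
  have Hsub: "H \<subseteq> (\<lambda>j. nm j g) ` {..<p}"
  proof
    fix h assume "h \<in> H"
    then obtain k where k: "h = zmult k g" unfolding H_def by blast
    show "h \<in> (\<lambda>j. nm j g) ` {..<p}"
    proof (cases "0 \<le> k")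
      case True
      then have "h = nm (nat k mod p) g" using k md by (simp add: zmult_nm)
      then show ?thesis using ppos by auto
    next
      case False
      then have "h = nm ((p - nat (-k) mod p) mod p) g" using k md neg by (simp add: zmult_nm)
      then show ?thesis using ppos by auto
    qed
  qed
  have Hsup: "(\<lambda>j. nm j g) ` {..<p} \<subseteq> H"
  proof
    fix h assume "h \<in> (\<lambda>j. nm j g) ` {..<p}"
    then obtain j where "h = nm j g" by blast
    then have "h = zmult (int j) g" by (simp add: zmult_nm)
    then show "h \<in> H" unfolding H_def by blast
  qed
  have Heq: "H = (\<lambda>j. nm j g) ` {..<p}" using Hsub Hsup by blast
  have inj: "inj_on (\<lambda>j. nm j g) {..<p}"
  proof (rule inj_onI)
    fix i j assume ij: "i \<in> {..<p}" "j \<in> {..<p}" "nm i g = nm j g"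
    show "i = j"
    proof (rule ccontr)
      assume "i \<noteq> j"
      then consider "i < j" | "j < i" by linarith
      then show False
      proof cases
        case 1
        have "nm j g = nm i g + nm (j - i) g" using 1 nm_add[of i "j-i" g] by simp
        moreover have "j - i < p" using 1 ij(2) by auto
        ultimately show False using pmin'[of "j-i"] 1 ij by auto
      next
        case 2
        have "nm i g = nm j g + nm (i - j) g" using 2 nm_add[of j "i-j" g] by simp
        moreover have "i - j < p" using 2 ij(1) by auto
        ultimately show False using pmin'[of "i-j"] 2 ij by auto
      qed
    qed
  qed
  have cardH: "card H = p" using Heq inj by (simp add: card_image)
  have sg: "is_subgroup H"
    unfolding is_subgroup_def
  proof (intro conjI ballI)
    show "0 \<in> H" using Heq ppos by (auto intro: image_eqI[of _ _ 0])
  next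
    fix x y assume "x \<in> H" "y \<in> H"
    then obtain i j where "x = nm i g" "y = nm j g" using Heq by blast
    then have "x + y = nm ((i + j) mod p) g" using md nm_add by metis
    then show "x + y \<in> H" using Heq ppos by auto
  next
    fix x assume "x \<in> H"
    then obtain i where "x = nm i g" using Heq by blast
    then have "- x = nm ((p - i mod p) mod p) g" using md neg by metis
    then show "- x \<in> H" using Heq ppos by auto
  qed
  have cyc: "is_cyclic_subgroup H" unfolding is_cyclic_subgroup_def H_def by blast
  have mult: "\<forall>h\<in>H. \<exists>i. h = nm i a"
    using Heq g_def nm_mult by (metis imageE)
  show ?thesis using sg cyc cardH p mult by blast
qed



lemma UNIV_plus: "0 \<in> Y \<Longrightarrow> (UNIV::'a::ab_group_add set) + Y = UNIV"
  using sub_plus2[of Y UNIV] by auto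

lemma stab_nm:
  fixes Y :: "'a::ab_group_add set"
  assumes "Y + {0,a} = Y" "y \<in> Y" shows "y + nm i a \<in> Y"
proof (induction i)
  case 0 then show ?case using assms by simp
next
  case (Suc i)
  have "(y + nm i a) + a \<in> Y + {0,a}" using Suc mem_plus2[of "(y + nm i a) + a" Y a] by simp
  then have "(y + nm i a) + a \<in> Y" using assms(1) by simp
  moreover have "(y + nm i a) + a = y + nm (Suc i) a" by (simp add: nm_Suc add_ac)
  ultimately show ?case by simp
qed

lemma Union_phi:
  fixes Y :: "'a::ab_group_add set"
  assumes "\<forall>y\<in>Y. \<forall>h\<in>H. y + h \<in> Y" "0 \<in> H"
  shows "\<Union> (phi H Y) = Y"
proof
  show "\<Union> (phi H Y) \<subseteq> Y"
  proof
    fix z assume "z \<in> \<Union> (phi H Y)"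
    then obtain y where "y \<in> Y" "z \<in> y +o H" unfolding phi_def by blast
    then obtain h where "h \<in> H" "z = y + h" unfolding elt_set_plus_def by blast
    then show "z \<in> Y" using assms(1) \<open>y \<in> Y\<close> by blast
  qed
  show "Y \<subseteq> \<Union> (phi H Y)"
  proof
    fix y assume "y \<in> Y"
    then have "y \<in> y +o H" using assms(2) unfolding elt_set_plus_def by force
    then show "y \<in> \<Union> (phi H Y)" using \<open>y \<in> Y\<close> unfolding phi_def by blast
  qed
qed

locale aut_ctx =
  fixes f :: "'a::{finite,ab_group_add} set \<Rightarrow> 'a set"
  assumes aut: "is_P0_aut f" and pull: "trivial_pullback f"
begin

lemma bij: "bij_betw f P0 P0" using aut unfolding is_P0_aut_def by blast

lemma fP0: "0 \<in> X \<Longrightarrow> 0 \<in> f X"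
  using bij_betwE[OF bij] unfolding P0_def by blast

lemma finj: "0 \<in> X \<Longrightarrow> 0 \<in> Y \<Longrightarrow> f X = f Y \<Longrightarrow> X = Y"
  using bij_betw_imp_inj_on[OF bij] unfolding P0_def inj_on_def by blast

lemma fsurj: "0 \<in> Z \<Longrightarrow> \<exists>Y. 0 \<in> Y \<and> f Y = Z"
proof -
  assume "0 \<in> Z"
  then have "Z \<in> f ` P0" using bij_betw_imp_surj_on[OF bij] unfolding P0_def by blast
  then show ?thesis unfolding P0_def by blast
qed

lemma fplus: "0 \<in> X \<Longrightarrow> 0 \<in> Y \<Longrightarrow> f (X + Y) = f X + f Y"
proof -
  assume "0 \<in> X" "0 \<in> Y"
  then have "X \<in> P0" "Y \<in> P0" unfolding P0_def by auto
  then show ?thesis using aut unfolding is_P0_aut_def by blast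
qed

lemma f2: "f {0,a} = {0,a}"
  using pull unfolding trivial_pullback_def by blast

lemma fplus2: "0 \<in> X \<Longrightarrow> f (X + {0,a}) = f X + {0,a}"
  using fplus[of X "{0,a}"] f2 by simp

lemma fU: "f UNIV = UNIV"
proof -
  obtain Y where Y: "0 \<in> Y" "f Y = UNIV" using fsurj[of UNIV] by blast
  have "f UNIV = f (UNIV + Y)" using UNIV_plus[OF Y(1)] by simp
  also have "\<dots> = f UNIV + UNIV" using fplus[of UNIV Y] Y by simp
  also have "\<dots> = UNIV" using fP0[of UNIV] by (simp add: add.commute UNIV_plus)
  finally show ?thesis .
qed

lemma Bstab:
  assumes B: "\<And>H. is_subgroup H \<Longrightarrow> is_cyclic_subgroup H \<Longrightarrow> prime (card H) \<Longrightarrow>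
              (\<forall>S\<in>P0_quot H. induced_aut f H S = S)"
    and X0: "0 \<in> X" and a: "a \<noteq> 0" and st: "X + {0,a} = X"
  shows "f X = X"
proof -
  obtain H where H: "is_subgroup H" "is_cyclic_subgroup H" "prime (card H)"
    and Hm: "\<forall>h\<in>H. \<exists>i. h = nm i a"
    using prime_subgroup[OF a] by blast
  have H0: "0 \<in> H" using H(1) unfolding is_subgroup_def by blast
  have stfX: "f X + {0,a} = f X" using fplus2[OF X0, of a] st by simp
  have sX: "\<forall>y\<in>X. \<forall>h\<in>H. y + h \<in> X"
  proof (intro ballI)
    fix y h assume "y \<in> X" "h \<in> H"
    then obtain i where "h = nm i a" using Hm by blast
    then show "y + h \<in> X" using stab_nm[OF st \<open>y \<in> X\<close>] by simp
  qed
  have sfX: "\<forall>y\<in>f X. \<forall>h\<in>H. y + h \<in> f X"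
  proof (intro ballI)
    fix y h assume "y \<in> f X" "h \<in> H"
    then obtain i where "h = nm i a" using Hm by blast
    then show "y + h \<in> f X" using stab_nm[OF stfX \<open>y \<in> f X\<close>] by simp
  qed
  define S where "S = phi H X"
  have SP: "S \<in> P0_quot H"
    unfolding P0_quot_def S_def phi_def quot_def
  proof (intro CollectI conjI)
    show "(\<lambda>a. a +o H) ` X \<subseteq> range (\<lambda>a. a +o H)" by blast
    have "0 +o H = H" unfolding elt_set_plus_def by simp
    then show "H \<in> (\<lambda>a. a +o H) ` X" using X0 by (metis imageI)
  qed
  have "induced_aut f H S = S" using B[OF H] SP by blast
  moreover have "phi_inv H S = X" unfolding phi_inv_def S_def using Union_phi[OF sX H0] .
  ultimately have "phi H (f X) = phi H X" unfolding induced_aut_def S_def by simp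
  then have "\<Union> (phi H (f X)) = \<Union> (phi H X)" by simp
  then show ?thesis using Union_phi[OF sX H0] Union_phi[OF sfX H0] by simp
qed

end


lemma cos_plus: "a \<noteq> 0 \<Longrightarrow> - {g} + {0, a} = (UNIV :: 'a::ab_group_add set)"
proof (rule set_eqI)
  fix z :: 'a assume "a \<noteq> 0"
  show "z \<in> - {g} + {0, a} \<longleftrightarrow> z \<in> UNIV"
  proof (cases "z = g")
    case True
    then have "z - a \<in> - {g}" using \<open>a \<noteq> 0\<close> by simp
    then show ?thesis unfolding mem_plus2 by simp
  next
    case False
    then show ?thesis unfolding mem_plus2 by simp
  qed
qed

context aut_ctx begin

lemma cos_char:
  fixes X :: "'a set"
  assumes "0 \<in> X" "X \<noteq> UNIV" "\<forall>a. a \<noteq> 0 \<longrightarrow> X + {0,a} = UNIV"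
  shows "\<exists>g. g \<noteq> 0 \<and> X = - {g}"
proof -
  obtain g where g: "g \<notin> X" using assms(2) by blast
  have "g \<noteq> 0" using g assms(1) by blast
  have "X = - {g}"
  proof
    show "X \<subseteq> - {g}" using g by blast
    show "- {g} \<subseteq> X"
    proof
      fix y assume y: "y \<in> - {g}"
      show "y \<in> X"
      proof (rule ccontr)
        assume ny: "y \<notin> X"
        have "g - y \<noteq> 0" using y by simp
        then have "X + {0, g - y} = UNIV" using assms(3) by simp
        then have "g \<in> X + {0, g - y}" by simp
        then show False using mem_plus2[of g X "g - y"] g ny by simp
      qed
    qed
  qed
  then show ?thesis using \<open>g \<noteq> 0\<close> by blast
qed

lemma cos_img:
  assumes "g \<noteq> 0" shows "\<exists>s. s \<noteq> 0 \<and> f (- {g}) = - {s}"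
proof (rule cos_char)
  have g0: "0 \<in> - {g}" using assms by simp
  then show "0 \<in> f (- {g})" by (rule fP0)
  show "f (- {g}) \<noteq> UNIV"
  proof
    assume "f (- {g}) = UNIV"
    then have "f (- {g}) = f UNIV" using fU by simp
    then have "- {g} = UNIV" using finj[OF g0, of UNIV] by simp
    then show False by auto
  qed
  show "\<forall>a. a \<noteq> 0 \<longrightarrow> f (- {g}) + {0, a} = UNIV"
  proof (intro allI impI)
    fix a :: 'a assume "a \<noteq> 0"
    have "f (- {g}) + {0, a} = f (- {g} + {0, a})" using fplus2[OF g0] by simp
    also have "\<dots> = UNIV" using cos_plus[OF \<open>a \<noteq> 0\<close>] fU by simp
    finally show "f (- {g}) + {0, a} = UNIV" .
  qed
qed

lemma cos_diff:
  assumes g: "g \<noteq> 0" and h: "h \<noteq> 0" and d2: "(g - h) + (g - h) \<noteq> 0"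
    and s: "f (- {g}) = - {s}" and r: "f (- {h}) = - {r}"
  shows "s - r = g - h"
proof -
  define d where "d = g - h"
  have dd: "d + d \<noteq> 0" using d2 d_def by simp
  then have "d \<noteq> 0" by auto
  define W where "W = - {g, h}"
  have W0: "0 \<in> W" using g h W_def by simp
  have e1: "W + {0, d} = - {g}"
  proof (rule set_eqI)
    fix z
    have "h - d \<noteq> g" using dd unfolding d_def by (auto simp: algebra_simps)
    moreover have "h - d \<noteq> h" using \<open>d \<noteq> 0\<close> by simp
    moreover have "g - d = h" unfolding d_def by simp
    ultimately show "z \<in> W + {0, d} \<longleftrightarrow> z \<in> - {g}"
      unfolding mem_plus2 W_def by auto
  qed
  have e2: "W + {0, - d} = - {h}"
  proof (rule set_eqI)
    fix z
    have "g + d \<noteq> h" using dd unfolding d_def by (auto simp: algebra_simps)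
    moreover have "g + d \<noteq> g" using \<open>d \<noteq> 0\<close> by simp
    moreover have "h + d = g" unfolding d_def by simp
    ultimately show "z \<in> W + {0, - d} \<longleftrightarrow> z \<in> - {h}"
      unfolding mem_plus2 W_def by auto
  qed
  have y1: "f W + {0, d} = - {s}" using fplus2[OF W0, of d] e1 s by simp
  have y2: "f W + {0, - d} = - {r}" using fplus2[OF W0, of "- d"] e2 r by simp
  have "s \<notin> f W + {0, d}" using y1 by simp
  then have "s \<notin> f W" "s - d \<notin> f W" unfolding mem_plus2 by auto
  then have "s - d \<notin> f W + {0, - d}" unfolding mem_plus2 by simp
  then have "s - d = r" using y2 by simp
  then show ?thesis unfolding d_def by (simp add: algebra_simps)
qed

end


context aut_ctx begin

lemma cos_fixed:
  assumes A: "\<And>H. is_subgroup H \<Longrightarrow> H \<noteq> UNIV \<Longrightarrow> (\<forall>X\<in>P0. X \<subseteq> H \<longrightarrow> f X = X)"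
    and nk: "\<not> iso_klein TYPE('a)"
    and g: "g \<noteq> 0"
  shows "f (- {g}) = - {g}"
proof -
  define sg where "sg x = (SOME s. s \<noteq> 0 \<and> f (- {x}) = - {s})" for x
  have sg: "sg x \<noteq> 0 \<and> f (- {x}) = - {sg x}" if "x \<noteq> 0" for x
    unfolding sg_def using cos_img[OF that] by (rule someI_ex)
  show ?thesis
  proof (cases "\<exists>c::'a. c + c \<noteq> 0")
    case True
    then obtain c :: 'a where c: "c + c \<noteq> 0" by blast
    have cnc: "- c \<noteq> c"
    proof
      assume "- c = c"
      then have "c + c = c + - c" by simp
      then show False using c by simp
    qed
    have diff: "sg x - sg y = x - y" if "x \<noteq> 0" "y \<noteq> 0" "(x - y) + (x - y) \<noteq> 0" for x y
      using cos_diff[OF that conjunct2[OF sg[OF that(1)]] conjunct2[OF sg[OF that(2)]]] .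
    have diff': "sg x - x = sg y - y" if "x \<noteq> 0" "y \<noteq> 0" "(x - y) + (x - y) \<noteq> 0" for x y
    proof -
      have "sg x - x = (sg x - sg y) - (x - y) + (sg y - y)" by (simp add: algebra_simps)
      also have "\<dots> = sg y - y" using diff[OF that] by simp
      finally show ?thesis .
    qed
    have const: "sg x - x = sg y - y" if x: "x \<noteq> 0" and y: "y \<noteq> 0" for x y
    proof (cases "(x - y) + (x - y) = 0")
      case False then show ?thesis using diff'[OF x y] by simp
    next
      case True
      define k where "k = (if x + c \<noteq> 0 then x + c else x - c)"
      have k0: "k \<noteq> 0"
      proof (cases "x + c \<noteq> 0")
        case True then show ?thesis unfolding k_def by simp
      next
        case False
        then have "x = - c" by (simp add: add_eq_0_iff)
        moreover have "- c \<noteq> c"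
        proof
          assume "- c = c"
          then have "c + c = c + - c" by simp
          then show False using c by simp
        qed
        ultimately have "x - c \<noteq> 0" by simp
        then show ?thesis using False unfolding k_def by simp
      qed
      have xk: "(x - k) + (x - k) \<noteq> 0"
      proof (cases "x + c \<noteq> 0")
        case True
        then have "(x - k) + (x - k) = - (c + c)" unfolding k_def by (simp add: algebra_simps)
        then show ?thesis using c cnc by simp
      next
        case False
        then have "k = x - c" unfolding k_def by simp
        then have "(x - k) + (x - k) = c + c" by (simp add: algebra_simps)
        then show ?thesis using c cnc by simp
      qed
      have "(y - k) + (y - k) = ((x - k) + (x - k)) - ((x - y) + (x - y))" by (simp add: algebra_simps)
      then have "(y - k) + (y - k) = (x - k) + (x - k)" by (simp only: True diff_zero)
      then have yk: "(y - k) + (y - k) \<noteq> 0" using xk by metis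
      have yk': "(k - y) + (k - y) \<noteq> 0"
      proof
        assume a0: "(k - y) + (k - y) = 0"
        have e: "(y - k) + (y - k) = - ((k - y) + (k - y))" by (simp add: algebra_simps)
        show False using yk e a0 by (metis minus_zero)
      qed
      have "sg x - x = sg k - k" using diff'[OF x k0 xk] .
      also have "\<dots> = sg y - y" using diff'[OF k0 y yk'] .
      finally show ?thesis .
    qed
    define t where "t = sg g - g"
    show ?thesis
    proof (cases "t = 0")
      case True
      then have "sg g = g" unfolding t_def by simp
      then show ?thesis using sg[OF g] by simp
    next
      case False
      then have h: "- t \<noteq> 0" by simp
      have "sg (- t) - (- t) = t" using const[OF h g] t_def by simp
      then have "sg (- t) = 0" by (simp add: algebra_simps)
      then show ?thesis using sg[OF h] by simp
    qed
  next
    case False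
    then have two: "\<And>c::'a. c + c = 0" by blast
    have neg: "\<And>c::'a. - c = c" using two minus_unique by blast
    define s where "s = sg g"
    have s: "s \<noteq> 0" "f (- {g}) = - {s}" using sg[OF g] s_def by auto
    show ?thesis
    proof (rule ccontr)
      assume ne: "f (- {g}) \<noteq> - {g}"
      then have sgn: "s \<noteq> g" using s by auto
      define M where "M = {0, g, s, g + s}"
      have gs0: "g + s \<noteq> 0"
      proof
        assume "g + s = 0"
        then have "s = - g" by (simp add: add_eq_0_iff)
        then show False using sgn neg by simp
      qed
      have gsg: "g + s \<noteq> g" using s by simp
      have gss: "g + s \<noteq> s" using g by simp
      have t1: "g + g = 0" "s + s = 0" "(g + s) + (g + s) = 0" using two by auto
      have t2a: "g + (g + s) = s" by (simp add: add.assoc[symmetric] two)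
      have t2b: "s + (g + s) = g" by (metis add.left_commute add_0_right two)
      have t2c: "(g + s) + g = s" using t2a by (simp add: add.commute)
      have t2d: "(g + s) + s = g" by (simp add: add.assoc two)
      have t2e: "s + g = g + s" by (simp add: add.commute)
      note t2 = t2a t2b t2c t2d t2e
      have closed: "x + y \<in> M" if "x \<in> M" "y \<in> M" for x y
        using that unfolding M_def
        by (elim insertE emptyE) (simp_all add: t1 t2)
      have subM: "is_subgroup M"
        unfolding is_subgroup_def using closed neg unfolding M_def by simp
      have d1: "g \<noteq> s" "s \<noteq> g" "g \<noteq> g + s" "g + s \<noteq> g" "s \<noteq> g + s" "g + s \<noteq> s"
        "0 \<noteq> g" "0 \<noteq> s" "0 \<noteq> g + s" "g + s \<noteq> 0"
        using sgn gs0 gsg gss g s by auto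
      have MU: "M \<noteq> UNIV"
      proof
        assume MU: "M = UNIV"
        define \<phi> where "\<phi> x = (x = g \<or> x = g + s, x = s \<or> x = g + s)" for x
        have allM: "x \<in> M" for x using MU by simp
        have vals: "\<phi> 0 = (False, False)" "\<phi> g = (True, False)" "\<phi> s = (False, True)" "\<phi> (g + s) = (True, True)"
          unfolding \<phi>_def using d1 g s by simp_all
        have "iso_klein TYPE('a)"
          unfolding iso_klein_def
        proof (intro exI conjI allI)
          show "bij \<phi>"
          proof (rule bijI)
            show "inj \<phi>"
            proof (rule injI)
              fix x y assume e: "\<phi> x = \<phi> y"
              have "x \<in> M" "y \<in> M" using allM by auto
              then show "x = y" using e unfolding M_def
                by (elim insertE emptyE) (simp_all add: vals)
            qed
            show "surj \<phi>"
            proof (rule surjI[of _ "\<lambda>(b1, b2). if b1 then (if b2 then g + s else g) else (if b2 then s else 0)"])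
              fix p :: "bool \<times> bool"
              show "\<phi> (case p of (b1, b2) \<Rightarrow> if b1 then if b2 then g + s else g else if b2 then s else 0) = p"
                using vals by (cases p) auto
            qed
          qed
          fix x y :: 'a
          have "x \<in> M" "y \<in> M" using allM by auto
          then show "\<phi> (x + y) = klein_add (\<phi> x) (\<phi> y)"
            unfolding M_def by (elim insertE emptyE) (simp_all add: vals t1 t2 klein_add_def)
        qed
        with nk show False by simp
      qed
      have MgP: "M - {g} \<in> P0" unfolding P0_def M_def using g by simp
      have fM: "f (M - {g}) = M - {g}" using A[OF subM MU] MgP by blast
      define Z where "Z = insert 0 (- M)"
      have dec: "(M - {g}) + Z = - {g}"
      proof (rule set_eqI)
        fix z
        show "z \<in> (M - {g}) + Z \<longleftrightarrow> z \<in> - {g}"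
        proof
          assume "z \<in> (M - {g}) + Z"
          then obtain m w where m: "m \<in> M - {g}" "w \<in> Z" "z = m + w"
            unfolding set_plus_def by blast
          show "z \<in> - {g}"
          proof (cases "w = 0")
            case True then show ?thesis using m by simp
          next
            case False
            then have wM: "w \<notin> M" using m(2) unfolding Z_def by simp
            show ?thesis
            proof
              assume "z \<in> {g}"
              then have "g = m + w" using m(3) by simp
              then have "w = g - m" by (simp add: algebra_simps)
              then have "w = g + m" using neg[of m] by (simp add: diff_conv_add_uminus)
              moreover have "g \<in> M" unfolding M_def by simp
              ultimately show False using closed m(1) wM by auto
            qed
          qed
        next
          assume z: "z \<in> - {g}"
          show "z \<in> (M - {g}) + Z"
          proof (cases "z \<in> M")
            case True
            have "z + 0 \<in> (M - {g}) + Z" using True z unfolding Z_def by (intro set_plus_intro) auto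
            then show ?thesis by simp
          next
            case False
            have "0 + z \<in> (M - {g}) + Z" using False g unfolding Z_def M_def by (intro set_plus_intro) auto
            then show ?thesis by simp
          qed
        qed
      qed
      have Z0: "0 \<in> Z" unfolding Z_def by simp
      have M0: "0 \<in> M - {g}" unfolding M_def using g by simp
      have "f (- {g}) = f (M - {g}) + f Z" using fplus[OF M0 Z0] dec by simp
      also have "\<dots> = (M - {g}) + f Z" using fM by simp
      finally have eq: "f (- {g}) = (M - {g}) + f Z" .
      have "s + 0 \<in> (M - {g}) + f Z" using sgn fP0[OF Z0] unfolding M_def by (intro set_plus_intro) auto
      then have "s \<in> f (- {g})" using eq by simp
      then show False using s by simp
    qed
  qed
qed

end


context aut_ctx begin

lemma main:
  assumes A: "\<And>H. is_subgroup H \<Longrightarrow> H \<noteq> UNIV \<Longrightarrow> (\<forall>X\<in>P0. X \<subseteq> H \<longrightarrow> f X = X)"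
    and B: "\<And>H. is_subgroup H \<Longrightarrow> is_cyclic_subgroup H \<Longrightarrow> prime (card H) \<Longrightarrow>
              (\<forall>S\<in>P0_quot H. induced_aut f H S = S)"
    and nk: "\<not> iso_klein TYPE('a)"
  shows "0 \<in> X \<Longrightarrow> f X = X"
proof (induction "card (- X)" arbitrary: X rule: less_induct)
  case less
  note X0 = less.prems
  show ?case
  proof (cases "\<exists>a. a \<noteq> 0 \<and> X + {0, a} = X")
    case True
    then obtain a where "a \<noteq> 0" "X + {0, a} = X" by blast
    then show ?thesis using Bstab[OF B X0] by blast
  next
    case False
    show ?thesis
    proof (cases "card (- X) \<le> 1")
      case True
      have fin: "finite (- X)" by simp
      show ?thesis
      proof (cases "- X = {}")
        case True
        then have "X = UNIV" by blast
        then show ?thesis using fU by simp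
      next
        case False
        then obtain g where "g \<in> - X" by blast
        have "\<forall>a1\<in>- X. \<forall>a2\<in>- X. a1 = a2"
          using True card_le_Suc0_iff_eq[OF fin] by simp
        then have "- X = {g}" using \<open>g \<in> - X\<close> by blast
        then have Xg: "X = - {g}" by auto
        then have "g \<noteq> 0" using X0 by auto
        then show ?thesis using cos_fixed[OF A nk] Xg by simp
      qed
    next
      case ge: False
      have other: "\<exists>y. y \<notin> X \<and> y \<noteq> x" for x
      proof (rule ccontr)
        assume "\<not> (\<exists>y. y \<notin> X \<and> y \<noteq> x)"
        then have "- X \<subseteq> {x}" by blast
        then have "card (- X) \<le> card {x}" by (intro card_mono) auto
        then show False using ge by simp
      qed
      have Xa: "f X + {0, a} = X + {0, a}" if a: "a \<noteq> 0" for a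
      proof -
        have ne: "X + {0, a} \<noteq> X" using False a by blast
        have sub: "X \<subseteq> X + {0, a}" by (rule sub_plus2) simp
        then have "- (X + {0, a}) \<subset> - X" using ne by blast
        then have lt: "card (- (X + {0, a})) < card (- X)" by (intro psubset_card_mono) auto
        have "0 \<in> X + {0, a}" using sub X0 by blast
        then have "f (X + {0, a}) = X + {0, a}" using less.hyps[OF lt] by blast
        then show ?thesis using fplus2[OF X0] by simp
      qed
      have s1: "f X \<subseteq> X"
      proof
        fix x assume fx: "x \<in> f X"
        show "x \<in> X"
        proof (rule ccontr)
          assume nx: "x \<notin> X"
          obtain y where y: "y \<notin> X" "y \<noteq> x" using other by blast
          have a: "x - y \<noteq> 0" using y by simp
          have "x \<notin> X + {0, x - y}" unfolding mem_plus2 using nx y by simp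
          then have "x \<notin> f X + {0, x - y}" using Xa[OF a] by simp
          moreover have "f X \<subseteq> f X + {0, x - y}" by (rule sub_plus2) simp
          ultimately show False using fx by blast
        qed
      qed
      have s2: "X \<subseteq> f X"
      proof
        fix z assume zx: "z \<in> X"
        show "z \<in> f X"
        proof (rule ccontr)
          assume nz: "z \<notin> f X"
          obtain w where w: "w \<notin> X" "w \<noteq> z" using other by blast
          then have wf: "w \<notin> f X" using s1 by blast
          have a: "z - w \<noteq> 0" using w by simp
          have "z \<notin> f X + {0, z - w}" unfolding mem_plus2 using nz wf by simp
          then have "z \<notin> X + {0, z - w}" using Xa[OF a] by simp
          moreover have "X \<subseteq> X + {0, z - w}" by (rule sub_plus2) simp
          ultimately show False using zx by blast
        qed
      qed
      show ?thesis using s1 s2 by blast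
    qed
  qed
qed

end

theorem proposition3p3:
  fixes f :: "'a::{finite, ab_group_add} set \<Rightarrow> 'a set"
  assumes nontriv: "card (UNIV :: 'a set) > 1"
    and not_klein: "\<not> iso_klein TYPE('a)"
    and aut: "is_P0_aut f"
    and pull: "trivial_pullback f"
    and A: "\<And>H. is_subgroup H \<Longrightarrow> H \<noteq> UNIV \<Longrightarrow> (\<forall>X\<in>P0. X \<subseteq> H \<longrightarrow> f X = X)"
    and B: "\<And>H. is_subgroup H \<Longrightarrow> is_cyclic_subgroup H \<Longrightarrow> prime (card H) \<Longrightarrow>
              (\<forall>S\<in>P0_quot H. induced_aut f H S = S)"
  shows "\<forall>X\<in>P0. f X = X"
proof -
  interpret aut_ctx f using aut pull by unfold_locales
  show ?thesis using main[OF A B not_klein] unfolding P0_def by blast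
qed

end
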